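(* Let $(\alpha_0,\beta_0)\in\Delta_K$, $(\alpha_n,\beta_n)=T^n(\alpha_0,\beta_0)$, $\varepsilon_n=\varepsilon(\alpha_n,\beta_n)$. Let $\mathcal U=\sum_{i=0}^2(\bar{\bar e}_i,i^* )$ and $\mathcal U'=\sum_{i=0}^2(\bar{\bar 0},i^* )$, and for $n\ge0$ set $\gamma_n=\Theta_{\varepsilon_0}\cdots\Theta_{\varepsilon_{n-2}}\Theta_{\varepsilon_{n-1}}(\mathcal U)$ (with $\mathcal U$ viewed as a patch of $\mathscr S(\bar{\bar\nu}(\alpha_n,\beta_n))$) and $\gamma'_n=\Theta_{\varepsilon_0}\cdots\Theta_{\varepsilon_{n-1}}(\mathcal U')$ (with $\mathcal U'$ viewed as a patch of $\mathscr S'(\bar{\bar\nu}(\alpha_n,\beta_n))$). Then, identifying patches with their sets of unit squares: (1) $\gamma_n\setminus\gamma'_n=\mathcal U$ and $\gamma'_n\setminus\gamma_n=\mathcal U'$; (2) $\gamma_n\prec\gamma_{n+1}$ for all $n$; (3) $\bigcup_{n\ge0}\gamma_n\subset\mathscr S(\bar{\bar\nu}(\alpha_0,\beta_0))$.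
   Context: Let $K\subset\mathbb{R}$ be a real cubic number field, $N=N_{K/\mathbb{Q}}$ its norm. Fix $r=p/q$ with $p,q$ positive coprime integers and $3\nmid p$. Let $\Delta_K=\{(\alpha,\beta)\in K^2:\ 1,\alpha,\beta \text{ linearly independent over }\mathbb{Q},\ \alpha,\beta>0,\ \alpha+\beta<1\}$ and $Ind=\{(i,j): i,j\in\{0,1,2\},\ i\neq j\}$. Let $\Delta=\{(x,y)\in\mathbb{R}^2: x,y\ge 0,\ x+y\le 1\}$ and $\triangle(1,2)=\{(x,y)\in\Delta: x\ge y\}$, $\triangle(2,1)=\{x\le y\}$, $\triangle(0,1)=\{2x+y-1\le 0\}$, $\triangle(1,0)=\{2x+y-1\ge 0\}$, $\triangle(0,2)=\{x+2y-1\le0\}$, $\triangle(2,0)=\{x+2y-1\ge 0\}$ (all subsets of $\Delta$). Maps $T_{(i,j)}:\triangle(i,j)\to\Delta$: $T_{(1,2)}(x,y)=(\frac{x-y}{1-y},\frac{y}{1-y})$, $T_{(2,1)}(x,y)=(\frac{x}{1-x},\frac{y-x}{1-x})$, $T_{(0,1)}(x,y)=(\frac{x}{1-x},\frac{y}{1-x})$, $T_{(1,0)}(x,y)=(\frac{2x+y-1}{x+y},\frac{y}{x+y})$, $T_{(0,2)}(x,y)=(\frac{x}{1-y},\frac{y}{1-y})$, $T_{(2,0)}(x,y)=(\frac{x}{x+y},\frac{x+2y-1}{x+y})$. For $(\alpha,\beta)\in\Delta_K$ put $\gamma=1-\alpha-\beta$ and $v_{\{1,2\}}=\frac{\alpha^r\beta^r}{|N(\alpha)N(\beta)|}$,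 $v_{\{0,1\}}=\frac{\alpha^r\gamma^r}{|N(\alpha)N(\gamma)|}$, $v_{\{0,2\}}=\frac{\beta^r\gamma^r}{|N(\beta)N(\gamma)|}$; the maximum is attained at a unique pair $\{i_0,j_0\}$. $\varepsilon(\alpha,\beta)$ is the ordered pair $(i,j)\in Ind$ with $\{i,j\}=\{i_0,j_0\}$ and $(\alpha,\beta)\in\triangle(i,j)$, and $T(\alpha,\beta)=T_{\varepsilon(\alpha,\beta)}(\alpha,\beta)$ (a map $\Delta_K\to\Delta_K$). For $(i,j)\in Ind$, $M_{(i,j)}=(m_{k\ell})_{0\le k,\ell\le2}$ with $m_{k\ell}=1$ if $k=\ell$ or $(k,\ell)=(i,j)$, and $0$ otherwise; $L_{(i,j)}:=M_{(j,i)}$. For $(\alpha,\beta)\in\Delta_K$, $\bar{\bar\nu}(\alpha,\beta)={}^t(1-\alpha-\beta,\alpha,\beta)$. Let $\bar{\bar e}_0,\bar{\bar e}_1,\bar{\bar e}_2$ be the standard basis of $\mathbb{R}^3$. A unit square $(\bar{\bar x},i^* )$ ($\bar{\bar x}\in\mathbb{Z}^3$, $i\in\{0,1,2\}$) is the set $\{\bar{\bar x}+t\bar{\bar e}_j+u\bar{\bar e}_k: t,u\in[0,1]\}$ with $\{i,j,k\}=\{0,1,2\}$. For $\bar{\bar a}\in\mathbb{R}^3_{>0}$ with $\mathbb{Q}$-linearly independent coordinates, the stepped surfaces are $\mathscr S(\bar{\bar a})=\{(\bar{\bar x},i^* ): \bar{\bar x}\in\mathbb{Z}^3, i\in\{0,1,2\},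 \langle\bar{\bar x},\bar{\bar a}\rangle>0,\ \langle\bar{\bar x}-\bar{\bar e}_i,\bar{\bar a}\rangle\le0\}$ and $\mathscr S'(\bar{\bar a})=\{(\bar{\bar x},i^* ): \langle\bar{\bar x},\bar{\bar a}\rangle\ge0,\ \langle\bar{\bar x}-\bar{\bar e}_i,\bar{\bar a}\rangle<0\}$. A patch is a finite formal sum of distinct unit squares, identified with its set of squares; $\gamma\prec\delta$ means the set of squares of $\gamma$ is contained in that of $\delta$. For $(i,j)\in Ind$ the dual substitution $\Theta_{(i,j)}$ is defined on unit squares by $\Theta_{(i,j)}(\bar{\bar x},j^* )=(L_{(i,j)}^{-1}(\bar{\bar x}+\bar{\bar e}_i),i^* )+(L_{(i,j)}^{-1}\bar{\bar x},j^* )$ and $\Theta_{(i,j)}(\bar{\bar x},k^* )=(L_{(i,j)}^{-1}\bar{\bar x},k^* )$ for $k\neq j$, and extended additively to formal sums. *)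

theory Defs
  imports "HOL-Analysis.Analysis"
begin

definition is_Q_basis :: "real set \<Rightarrow> real^3 \<Rightarrow> bool" where
  "is_Q_basis K b \<longleftrightarrow>
     (\<forall>k. b $ k \<in> K) \<and>
     (\<forall>c::real^3. (\<forall>k. c $ k \<in> \<rat>) \<longrightarrow> c \<bullet> b = 0 \<longrightarrow> c = 0) \<and>
     K = {c \<bullet> b | c::real^3. \<forall>k. c $ k \<in> \<rat>}"

definition real_cubic_field :: "real set \<Rightarrow> bool" where
  "real_cubic_field K \<longleftrightarrow>
     0 \<in> K \<and> 1 \<in> K \<and>
     (\<forall>x\<in>K. \<forall>y\<in>K. x + y \<in> K \<and> x - y \<in> K \<and> x * y \<in> K) \<and>
     (\<forall>x\<in>K. x \<noteq> 0 \<longrightarrow> inverse x \<in> K) \<and>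
     (\<exists>b. is_Q_basis K b)"

text \<open>The norm N_{K/Q}(a): determinant of the (rational) matrix of the
 Q-linear map x \<mapsto> a x with respect to a Q-basis of K.\<close>

definition field_norm :: "real set \<Rightarrow> real \<Rightarrow> real" where
  "field_norm K a =
     (let b = (SOME b. is_Q_basis K b) in
      det (SOME M::real^3^3. (\<forall>k l. M $ k $ l \<in> \<rat>) \<and> a *\<^sub>R b = M *v b))"

definition Delta_K :: "real set \<Rightarrow> (real \<times> real) set" where
  "Delta_K K = {(a, b). a \<in> K \<and> b \<in> K \<and>
     (\<forall>c0 c1 c2. c0 \<in> \<rat> \<longrightarrow> c1 \<in> \<rat> \<longrightarrow> c2 \<in> \<rat> \<longrightarrow>
        c0 + c1 * a + c2 * b = 0 \<longrightarrow> c0 = 0 \<and> c1 = 0 \<and> c2 = 0) \<and>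
     a > 0 \<and> b > 0 \<and> a + b < 1}"

definition Ind :: "(3 \<times> 3) set" where
  "Ind = {(i, j). i \<noteq> j}"

definition Delta :: "(real \<times> real) set" where
  "Delta = {(x, y). x \<ge> 0 \<and> y \<ge> 0 \<and> x + y \<le> 1}"

definition tri :: "3 \<times> 3 \<Rightarrow> (real \<times> real) set" where
  "tri e = Delta \<inter>
     (if e = (1,2) then {(x, y). x \<ge> y}
      else if e = (2,1) then {(x, y). x \<le> y}
      else if e = (0,1) then {(x, y). 2*x + y - 1 \<le> 0}
      else if e = (1,0) then {(x, y). 2*x + y - 1 \<ge> 0}
      else if e = (0,2) then {(x, y). x + 2*y - 1 \<le> 0}
      else if e = (2,0) then {(x, y). x + 2*y - 1 \<ge> 0}
      else {})"

definition Tmap :: "3 \<times> 3 \<Rightarrow> real \<times> real \<Rightarrow> real \<times> real" where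
  "Tmap e xy = (case xy of (x, y) \<Rightarrow>
     (if e = (1,2) then ((x - y) / (1 - y), y / (1 - y))
      else if e = (2,1) then (x / (1 - x), (y - x) / (1 - x))
      else if e = (0,1) then (x / (1 - x), y / (1 - x))
      else if e = (1,0) then ((2*x + y - 1) / (x + y), y / (x + y))
      else if e = (0,2) then (x / (1 - y), y / (1 - y))
      else ((x / (x + y), (x + 2*y - 1) / (x + y)))))"

text \<open>The selection \<open>\<epsilon>\<close>: the pair {i0,j0} maximising v_{i0 j0} (the maximum is
 unique on Delta_K), ordered according to the triangle containing the point.\<close>

definition epsilon :: "real set \<Rightarrow> real \<Rightarrow> real \<times> real \<Rightarrow> 3 \<times> 3" where
  "epsilon K r ab = (case ab of (a, b) \<Rightarrow>
     (let c = 1 - a - b;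
          v12 = a powr r * b powr r / \<bar>field_norm K a * field_norm K b\<bar>;
          v01 = a powr r * c powr r / \<bar>field_norm K a * field_norm K c\<bar>;
          v02 = b powr r * c powr r / \<bar>field_norm K b * field_norm K c\<bar>
      in if v12 > v01 \<and> v12 > v02 then (if (a, b) \<in> tri (1,2) then (1,2) else (2,1))
         else if v01 > v12 \<and> v01 > v02 then (if (a, b) \<in> tri (0,1) then (0,1) else (1,0))
         else (if (a, b) \<in> tri (0,2) then (0,2) else (2,0))))"

definition Tgauss :: "real set \<Rightarrow> real \<Rightarrow> real \<times> real \<Rightarrow> real \<times> real" where
  "Tgauss K r ab = Tmap (epsilon K r ab) ab"

definition nu :: "real \<times> real \<Rightarrow> real^3" where
  "nu ab = (case ab of (a, b) \<Rightarrow> (\<chi> k. if k = 0 then 1 - a - b else if k = 1 then a else b))"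

text \<open>A unit square (x, i*) is represented by the pair (x, i) with x an integer
 point of R^3 (represented in real^3) and i :: 3.\<close>

type_synonym square = "(real^3) \<times> 3"

definition int_vec :: "real^3 \<Rightarrow> bool" where
  "int_vec x \<longleftrightarrow> (\<forall>k. x $ k \<in> \<int>)"

definition ee :: "3 \<Rightarrow> real^3" where
  "ee i = axis i 1"

definition stepped :: "real^3 \<Rightarrow> square set" where
  "stepped a = {(x, i). int_vec x \<and> x \<bullet> a > 0 \<and> (x - ee i) \<bullet> a \<le> 0}"

definition stepped' :: "real^3 \<Rightarrow> square set" where
  "stepped' a = {(x, i). int_vec x \<and> x \<bullet> a \<ge> 0 \<and> (x - ee i) \<bullet> a < 0}"

definition Mmat :: "3 \<times> 3 \<Rightarrow> real^3^3" where
  "Mmat e = (\<chi> k l. if k = l \<or> (k, l) = e then 1 else 0)"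

definition Lmat :: "3 \<times> 3 \<Rightarrow> real^3^3" where
  "Lmat e = (case e of (i, j) \<Rightarrow> Mmat (j, i))"

definition Theta_sq :: "3 \<times> 3 \<Rightarrow> square \<Rightarrow> square set" where
  "Theta_sq e s = (case e of (i, j) \<Rightarrow> case s of (x, k) \<Rightarrow>
     (let Li = matrix_inv (Lmat (i, j)) in
      if k = j then {(Li *v (x + ee i), i), (Li *v x, j)}
      else {(Li *v x, k)}))"

text \<open>Patches are identified with their sets of unit squares; Theta is
 extended additively.\<close>

definition Theta :: "3 \<times> 3 \<Rightarrow> square set \<Rightarrow> square set" where
  "Theta e P = (\<Union>s\<in>P. Theta_sq e s)"

text \<open>Theta_comp eps n P = Theta_{eps 0} (... (Theta_{eps (n-1)} P)).\<close>

fun Theta_comp :: "(nat \<Rightarrow> 3 \<times> 3) \<Rightarrow> nat \<Rightarrow> square set \<Rightarrow> square set" where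
  "Theta_comp eps 0 P = P"
| "Theta_comp eps (Suc n) P = Theta_comp eps n (Theta (eps n) P)"

definition U :: "square set" where
  "U = {(ee i, i) | i. True}"

definition U' :: "square set" where
  "U' = {(0, i) | i. True}"

end

theory Submission
  imports Defs
begin

definition ok6 :: "3 \<times> 3 \<Rightarrow> bool" where
  "ok6 e \<longleftrightarrow> e \<in> {(1,2),(2,1),(0,1),(1,0),(0,2),(2,0)}"

definition Ninv :: "3 \<times> 3 \<Rightarrow> real^3^3" where
  "Ninv e = (case e of (i,j) \<Rightarrow> (\<chi> k l. if k = l then 1 else if (k,l) = (j,i) then -1 else 0))"

lemma three0: "(3::3) = 0" by simp

lemma forall_3': "(\<forall>i::3. P i) \<longleftrightarrow> P 0 \<and> P 1 \<and> P 2"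
  using forall_3[of P] by (simp add: three0 conj_commute conj_left_commute)

lemma sum_3': "sum f (UNIV::3 set) = f 0 + f 1 + f 2"
  using sum_3[of f] by (simp add: three0 ac_simps)

lemma ok6_cases: "ok6 e \<Longrightarrow> e=(1,2) \<or> e=(2,1) \<or> e=(0,1) \<or> e=(1,0) \<or> e=(0,2) \<or> e=(2,0)"
  by (simp add: ok6_def)

lemma ok6_neq: "ok6 (i,j) \<Longrightarrow> i \<noteq> j"
  by (auto simp: ok6_def)

lemma ee_nth: "ee m $ k = (if k = m then 1 else 0)"
  by (simp add: ee_def axis_def)

lemma inner_ee: "inner (ee m) v = v $ m" "inner v (ee m) = v $ m"
  by (simp_all add: ee_def inner_axis inner_axis')

lemma inv_eq: "(A::real^3^3) ** B = mat 1 \<Longrightarrow> B ** A = mat 1 \<Longrightarrow> matrix_inv A = B"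
proof -
  assume h: "A ** B = mat 1" "B ** A = mat 1"
  let ?C = "SOME C. A ** C = mat 1 \<and> C ** A = mat 1"
  have "A ** ?C = mat 1 \<and> ?C ** A = mat 1" using someI[of "\<lambda>C. A ** C = mat 1 \<and> C ** A = mat 1" B] h by blast
  then have "?C = ?C ** (A ** B)" using h by simp
  also have "\<dots> = (?C ** A) ** B" by (simp add: matrix_mul_assoc)
  also have "\<dots> = B" using \<open>A ** ?C = mat 1 \<and> ?C ** A = mat 1\<close> by simp
  finally show ?thesis unfolding matrix_inv_def by simp
qed

lemma Lmat_inv: "ok6 e \<Longrightarrow> matrix_inv (Lmat e) = Ninv e"
  apply (rule inv_eq)
  by (drule ok6_cases, elim disjE, simp_all add: Lmat_def Mmat_def Ninv_def vec_eq_iff matrix_matrix_mult_def sum_3' forall_3' mat_def)+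

lemma Ninv_app: "ok6 (i,j) \<Longrightarrow> Ninv (i,j) *v x = x - (x$i) *\<^sub>R ee j"
  by (drule ok6_cases, elim disjE, simp_all add: Ninv_def vec_eq_iff matrix_vector_mult_def sum_3' forall_3' ee_nth)

lemma int_vec_Ninv: "ok6 (i,j) \<Longrightarrow> int_vec x \<Longrightarrow> int_vec (Ninv (i,j) *v x)"
  unfolding Ninv_app int_vec_def by (auto simp: ee_nth)

lemma int_vec_ee: "int_vec (ee m)" "int_vec 0"
  by (auto simp: int_vec_def ee_nth)

lemma int_vec_add: "int_vec x \<Longrightarrow> int_vec y \<Longrightarrow> int_vec (x + y)"
  and int_vec_diff: "int_vec x \<Longrightarrow> int_vec y \<Longrightarrow> int_vec (x - y)"
  by (auto simp: int_vec_def)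

definition rel :: "3 \<times> 3 \<Rightarrow> real^3 \<Rightarrow> real^3 \<Rightarrow> real \<Rightarrow> bool" where
  "rel e a a' c \<longleftrightarrow> c > 0 \<and> (case e of (i,j) \<Rightarrow> a = c *\<^sub>R (a' + (a'$j) *\<^sub>R ee i))"

lemma rel_facts:
  assumes "ok6 (i,j)" "rel (i,j) a a' c"
  shows "c > 0" "a$j = c * a'$j" "a$i = c * (a'$i + a'$j)"
    "\<And>m. m \<noteq> i \<Longrightarrow> a$m = c * a'$m"
    "\<And>y. inner (Ninv (i,j) *v y) a = c * inner y a'"
proof -
  have ij: "i \<noteq> j" using ok6_neq assms(1) .
  have a: "a = c *\<^sub>R (a' + (a'$j) *\<^sub>R ee i)" and c: "c > 0" using assms(2) by (auto simp: rel_def)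
  show "c > 0" by fact
  show aj: "a$j = c * a'$j" using ij by (simp add: a ee_nth)
  show "a$i = c * (a'$i + a'$j)" by (simp add: a ee_nth)
  show "\<And>m. m \<noteq> i \<Longrightarrow> a$m = c * a'$m" by (simp add: a ee_nth)
  fix y
  have "inner (Ninv (i,j) *v y) a = inner y a - y$i * a$j"
    using assms(1) by (simp add: Ninv_app inner_diff_left inner_ee)
  also have "inner y a = c * (inner y a' + a'$j * y$i)"
    by (simp add: a inner_add_right inner_ee algebra_simps)
  finally show "inner (Ninv (i,j) *v y) a = c * inner y a'"
    using aj by (simp add: algebra_simps)
qed

lemma Theta_mono: "P \<subseteq> Q \<Longrightarrow> Theta e P \<subseteq> Theta e Q"
  unfolding Theta_def by blast

lemma Theta_Un: "Theta e (P \<union> Q) = Theta e P \<union> Theta e Q"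
  unfolding Theta_def by blast

lemma Theta_sq_eq: "ok6 (i,j) \<Longrightarrow> Theta_sq (i,j) (x,k) =
   (if k = j then {(Ninv (i,j) *v (x + ee i), i), (Ninv (i,j) *v x, j)} else {(Ninv (i,j) *v x, k)})"
  unfolding Theta_sq_def by (simp add: Lmat_inv Let_def)

lemma Theta_stepped:
  assumes e: "ok6 (i,j)" and r: "rel (i,j) a a' c" and pos: "\<And>m. a'$m > 0"
  shows "Theta (i,j) (stepped a') \<subseteq> stepped a" "Theta (i,j) (stepped' a') \<subseteq> stepped' a"
proof -
  note F = rel_facts[OF e r]
  have ij: "i \<noteq> j" using ok6_neq e .
  have c: "c > 0" by (rule F(1))
  have pi: "a'$i > 0" and pj: "a'$j > 0" using pos by auto
  have ak: "a$k \<ge> c * a'$k" for k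
  proof (cases "k = i")
    case True thus ?thesis using F(3) pj c by (simp add: algebra_simps)
  next
    case False thus ?thesis using F(4) by simp
  qed
  have ak2: "a$k = c * a'$k" if "k \<noteq> i" for k using F(4) that .
  have L: "inner (Ninv (i,j) *v y - ee m) a = c * inner y a' - a$m" for y m
    by (simp add: inner_diff_left inner_ee F(5))
  have L0: "inner (Ninv (i,j) *v y) a = c * inner y a'" for y by (rule F(5))
  have d: "inner (x - ee m) a' = inner x a' - a'$m" for x m by (simp add: inner_diff_left inner_ee)
  have dp: "inner (x + ee m) a' = inner x a' + a'$m" for x m by (simp add: inner_add_left inner_ee)
  show "Theta (i,j) (stepped a') \<subseteq> stepped a"
  proof
    fix s assume "s \<in> Theta (i,j) (stepped a')"
    then obtain x k where xk: "(x,k) \<in> stepped a'" and s: "s \<in> Theta_sq (i,j) (x,k)"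
      unfolding Theta_def by auto
    have iv: "int_vec x" and g1: "inner x a' > 0" and g2: "inner (x - ee k) a' \<le> 0"
      using xk by (auto simp: stepped_def)
    show "s \<in> stepped a"
    proof (cases "k = j")
      case True
      then have s': "s = (Ninv (i,j) *v (x + ee i), i) \<or> s = (Ninv (i,j) *v x, j)"
        using s by (simp add: Theta_sq_eq[OF e])
      have ivs: "int_vec (Ninv (i,j) *v (x + ee i))" "int_vec (Ninv (i,j) *v x)"
        using int_vec_Ninv[OF e] int_vec_add int_vec_ee iv by blast+
      have "0 < c * (inner x a' + a'$i)" using c g1 pi by simp
      moreover have "c * (inner x a' + a'$i) - c * (a'$i + a'$j) \<le> 0"
        using c g2 d[of x j] True by (simp add: mult_le_0_iff algebra_simps)
      moreover have "0 < c * inner x a'" using c g1 by simp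
      moreover have "c * inner x a' - c * a'$j \<le> 0"
        using c g2 d[of x j] True by (simp add: mult_le_0_iff algebra_simps)
      ultimately show ?thesis using s' ivs unfolding stepped_def
        by (auto simp: L L0 dp F(2) F(3))
    next
      case False
      then have s': "s = (Ninv (i,j) *v x, k)"
        using s by (simp add: Theta_sq_eq[OF e])
      have ivs: "int_vec (Ninv (i,j) *v x)" using int_vec_Ninv[OF e] iv by blast
      have "0 < c * inner x a'" using c g1 by simp
      moreover have "c * inner x a' - c * a'$k \<le> 0"
        using c g2 d[of x k] by (simp add: mult_le_0_iff algebra_simps)
      ultimately show ?thesis using s' ivs ak[of k] unfolding stepped_def
        by (auto simp: L L0)
    qed
  qed
  show "Theta (i,j) (stepped' a') \<subseteq> stepped' a"
  proof
    fix s assume "s \<in> Theta (i,j) (stepped' a')"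
    then obtain x k where xk: "(x,k) \<in> stepped' a'" and s: "s \<in> Theta_sq (i,j) (x,k)"
      unfolding Theta_def by auto
    have iv: "int_vec x" and g1: "inner x a' \<ge> 0" and g2: "inner (x - ee k) a' < 0"
      using xk by (auto simp: stepped'_def)
    show "s \<in> stepped' a"
    proof (cases "k = j")
      case True
      then have s': "s = (Ninv (i,j) *v (x + ee i), i) \<or> s = (Ninv (i,j) *v x, j)"
        using s by (simp add: Theta_sq_eq[OF e])
      have ivs: "int_vec (Ninv (i,j) *v (x + ee i))" "int_vec (Ninv (i,j) *v x)"
        using int_vec_Ninv[OF e] int_vec_add int_vec_ee iv by blast+
      have "0 \<le> c * (inner x a' + a'$i)" using c g1 pi by simp
      moreover have "c * (inner x a' + a'$i) - c * (a'$i + a'$j) < 0"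
        using c g2 d[of x j] True by (simp add: mult_less_0_iff algebra_simps)
      moreover have "0 \<le> c * inner x a'" using c g1 by simp
      moreover have "c * inner x a' - c * a'$j < 0"
        using c g2 d[of x j] True by (simp add: mult_less_0_iff algebra_simps)
      ultimately show ?thesis using s' ivs unfolding stepped'_def
        by (auto simp: L L0 dp F(2) F(3))
    next
      case False
      then have s': "s = (Ninv (i,j) *v x, k)"
        using s by (simp add: Theta_sq_eq[OF e])
      have ivs: "int_vec (Ninv (i,j) *v x)" using int_vec_Ninv[OF e] iv by blast
      have "0 \<le> c * inner x a'" using c g1 by simp
      moreover have "c * inner x a' - c * a'$k < 0"
        using c g2 d[of x k] by (simp add: mult_less_0_iff algebra_simps)
      ultimately show ?thesis using s' ivs ak[of k] unfolding stepped'_def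
        by (auto simp: L L0)
    qed
  qed
qed

lemma Ninv_ee: "ok6 (i,j) \<Longrightarrow> Ninv (i,j) *v ee m = (if m = i then ee i - ee j else ee m)"
  by (simp add: Ninv_app ee_nth)

lemma Ninv_ee2: "ok6 (i,j) \<Longrightarrow> Ninv (i,j) *v (ee j + ee i) = ee i"
  using ok6_neq[of i j] by (simp add: Ninv_app ee_nth)

lemma Ninv_0: "ok6 (i,j) \<Longrightarrow> Ninv (i,j) *v 0 = 0"
  by (simp add: Ninv_app)

lemma ee_inj: "ee m = ee k \<longleftrightarrow> m = k"
  by (metis ee_nth zero_neq_one)

lemma ee_ne0: "ee m \<noteq> 0"
  by (metis ee_nth zero_index zero_neq_one)

lemma Theta_U: assumes e: "ok6 (i,j)"
  shows "Theta (i,j) U = U \<union> {(ee i - ee j, i)}"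
proof -
  have ij: "i \<noteq> j" using ok6_neq e .
  have A: "Theta (i,j) U = (\<Union>m. Theta_sq (i,j) (ee m, m))"
    unfolding Theta_def U_def by blast
  have B: "Theta_sq (i,j) (ee m, m) =
     (if m = j then {(ee i, i), (ee j, j)} else if m = i then {(ee i - ee j, i)} else {(ee m, m)})" for m
  proof (cases "m = j")
    case True thus ?thesis using ij by (simp add: Theta_sq_eq[OF e] Ninv_ee[OF e] Ninv_ee2[OF e])
  next
    case False thus ?thesis by (simp add: Theta_sq_eq[OF e] Ninv_ee[OF e])
  qed
  show ?thesis
  proof (rule set_eqI)
    fix s
    show "s \<in> Theta (i,j) U \<longleftrightarrow> s \<in> U \<union> {(ee i - ee j, i)}"
    proof
      assume "s \<in> Theta (i,j) U"
      then obtain m where "s \<in> Theta_sq (i,j) (ee m, m)" unfolding A by blast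
      then show "s \<in> U \<union> {(ee i - ee j, i)}" unfolding B U_def by (auto split: if_splits)
    next
      assume s: "s \<in> U \<union> {(ee i - ee j, i)}"
      show "s \<in> Theta (i,j) U"
      proof (cases "s = (ee i - ee j, i)")
        case True
        have "s \<in> Theta_sq (i,j) (ee i, i)" using True ij by (simp only: B) simp
        thus ?thesis unfolding A by blast
      next
        case False
        then obtain m where sm: "s = (ee m, m)" using s unfolding U_def by blast
        show ?thesis
        proof (cases "m = i")
          case True
          have "s \<in> Theta_sq (i,j) (ee j, j)" using True sm by (simp only: B) simp
          thus ?thesis unfolding A by blast
        next
          case False
          have "s \<in> Theta_sq (i,j) (ee m, m)" using False sm by (simp only: B) simp
          thus ?thesis unfolding A by blast
        qed
      qed
    qed
  qed
qed

lemma Theta_U': assumes e: "ok6 (i,j)"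
  shows "Theta (i,j) U' = U' \<union> {(ee i - ee j, i)}"
proof -
  have ij: "i \<noteq> j" using ok6_neq e .
  have A: "Theta (i,j) U' = (\<Union>m. Theta_sq (i,j) (0, m))"
    unfolding Theta_def U'_def by blast
  have B: "Theta_sq (i,j) (0, m) =
     (if m = j then {(ee i - ee j, i), (0, j)} else {(0, m)})" for m
  proof (cases "m = j")
    case True thus ?thesis using ij by (simp add: Theta_sq_eq[OF e] Ninv_ee[OF e] Ninv_0[OF e])
  next
    case False thus ?thesis by (simp add: Theta_sq_eq[OF e] Ninv_0[OF e])
  qed
  show ?thesis
  proof (rule set_eqI)
    fix s
    show "s \<in> Theta (i,j) U' \<longleftrightarrow> s \<in> U' \<union> {(ee i - ee j, i)}"
    proof
      assume "s \<in> Theta (i,j) U'"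
      then obtain m where "s \<in> Theta_sq (i,j) (0, m)" unfolding A by blast
      then show "s \<in> U' \<union> {(ee i - ee j, i)}" unfolding B U'_def by (auto split: if_splits)
    next
      assume s: "s \<in> U' \<union> {(ee i - ee j, i)}"
      show "s \<in> Theta (i,j) U'"
      proof (cases "s = (ee i - ee j, i)")
        case True
        have "s \<in> Theta_sq (i,j) (0, j)" using True by (simp only: B) simp
        thus ?thesis unfolding A by blast
      next
        case False
        then obtain m where sm: "s = (0, m)" using s unfolding U'_def by blast
        have "s \<in> Theta_sq (i,j) (0, m)" using sm by (simp only: B) simp
        thus ?thesis unfolding A by blast
      qed
    qed
  qed
qed

definition Inv :: "real^3 \<Rightarrow> square set \<Rightarrow> square set \<Rightarrow> bool" where
  "Inv a G G' \<longleftrightarrow> G \<subseteq> stepped a \<and> G' \<subseteq> stepped' a \<and> U \<subseteq> G \<and> U' \<subseteq> G' \<and> G - U = G' - U'"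

lemma U_not_stepped': "U \<inter> stepped' a = {}"
  by (auto simp: U_def stepped'_def)

lemma U'_not_stepped: "U' \<inter> stepped a = {}"
  by (auto simp: U'_def stepped_def)

lemma U_stepped: "(\<And>m. a$m > 0) \<Longrightarrow> U \<subseteq> stepped a"
  by (auto simp: U_def stepped_def int_vec_ee inner_ee)

lemma U'_stepped': "(\<And>m. a$m > 0) \<Longrightarrow> U' \<subseteq> stepped' a"
  by (auto simp: U'_def stepped'_def int_vec_ee inner_ee)

lemma Inv_base: "(\<And>m. a$m > 0) \<Longrightarrow> Inv a U U'"
  unfolding Inv_def using U_stepped U'_stepped' U_not_stepped' U'_not_stepped by blast

lemma Inv_step:
  assumes e: "ok6 (i,j)" and r: "rel (i,j) a a' c" and pos: "\<And>m. a'$m > 0"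
    and inv: "Inv a' G G'"
  shows "Inv a (Theta (i,j) G) (Theta (i,j) G')"
proof -
  note F = rel_facts[OF e r]
  note TS = Theta_stepped[OF e r pos]
  define d where "d = (ee i - ee j, i)"
  have G: "G \<subseteq> stepped a'" "G' \<subseteq> stepped' a'" "U \<subseteq> G" "U' \<subseteq> G'" "G - U = G' - U'"
    using inv by (auto simp: Inv_def)
  define X where "X = G - U"
  have GX: "G = X \<union> U" "G' = X \<union> U'" using G unfolding X_def by auto
  have XS: "X \<subseteq> stepped a'" "X \<subseteq> stepped' a'" using G GX by auto
  have TX: "Theta (i,j) X \<subseteq> stepped a" "Theta (i,j) X \<subseteq> stepped' a"
    using Theta_mono[OF XS(1), of "(i,j)"] Theta_mono[OF XS(2), of "(i,j)"] TS by blast+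
  have dS: "d \<in> stepped a" "d \<in> stepped' a"
    using F(1) pos[of i] pos[of j] ok6_neq[OF e]
    by (auto simp: d_def stepped_def stepped'_def int_vec_diff int_vec_ee inner_diff_left inner_ee F(2) F(3))
  have TG: "Theta (i,j) G = Theta (i,j) X \<union> U \<union> {d}" "Theta (i,j) G' = Theta (i,j) X \<union> U' \<union> {d}"
    using GX Theta_Un Theta_U[OF e] Theta_U'[OF e] unfolding d_def by auto
  show ?thesis unfolding Inv_def
  proof (intro conjI)
    show "Theta (i,j) G \<subseteq> stepped a" "Theta (i,j) G' \<subseteq> stepped' a"
      using Theta_mono[OF G(1), of "(i,j)"] Theta_mono[OF G(2), of "(i,j)"] TS by blast+
    show "U \<subseteq> Theta (i,j) G" "U' \<subseteq> Theta (i,j) G'" using TG by auto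
    show "Theta (i,j) G - U = Theta (i,j) G' - U'"
      using TG TX dS U_not_stepped'[of a] U'_not_stepped[of a] by blast
  qed
qed

lemma Inv_conseq:
  assumes "Inv a G G'" shows "G - G' = U" "G' - G = U'" "G \<subseteq> stepped a"
  using assms U_not_stepped'[of a] U'_not_stepped[of a] unfolding Inv_def by blast+

lemma mulD: "(D::real) \<noteq> 0 \<Longrightarrow> (c0 + c1 * (A/D) + c2 * (B/D)) * D = c0 * D + c1 * A + c2 * B"
  by (simp add: field_simps)

definition good :: "real \<times> real \<Rightarrow> bool" where
  "good ab \<longleftrightarrow> (case ab of (x,y) \<Rightarrow> x > 0 \<and> y > 0 \<and> x + y < 1 \<and>
     (\<forall>c0 c1 c2. c0 \<in> \<rat> \<longrightarrow> c1 \<in> \<rat> \<longrightarrow> c2 \<in> \<rat> \<longrightarrow>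
        c0 + c1 * x + c2 * y = 0 \<longrightarrow> c0 = 0 \<and> c1 = 0 \<and> c2 = 0))"

lemma good_nu_pos: "good ab \<Longrightarrow> nu ab $ m > 0"
  by (cases ab) (auto simp: good_def nu_def)

lemma eps_form:
  assumes "x > 0" "y > 0" "x + y < 1"
  shows "(epsilon K r (x,y) = (1,2) \<and> y \<le> x) \<or> (epsilon K r (x,y) = (2,1) \<and> x \<le> y) \<or>
         (epsilon K r (x,y) = (0,1) \<and> 2*x+y-1 \<le> 0) \<or> (epsilon K r (x,y) = (1,0) \<and> 2*x+y-1 \<ge> 0) \<or>
         (epsilon K r (x,y) = (0,2) \<and> x+2*y-1 \<le> 0) \<or> (epsilon K r (x,y) = (2,0) \<and> x+2*y-1 \<ge> 0)"
  using assms unfolding epsilon_def Let_def tri_def Delta_def by auto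

lemma case12:
  assumes g: "good (x,y)" and h: "y \<le> x"
  shows "good (Tmap (1,2) (x,y)) \<and> rel (1,2) (nu (x,y)) (nu (Tmap (1,2) (x,y))) (1-y)"
proof -
  have x: "x > 0" and y: "y > 0" and s: "x + y < 1" and
    Q: "\<And>c0 c1 c2. c0 \<in> \<rat> \<Longrightarrow> c1 \<in> \<rat> \<Longrightarrow> c2 \<in> \<rat> \<Longrightarrow>
        c0 + c1 * x + c2 * y = 0 \<Longrightarrow> c0 = 0 \<and> c1 = 0 \<and> c2 = 0"
    using g by (auto simp: good_def)
  have ne: "(0) + (1) * x + (-1) * y \<noteq> 0"
  proof
    assume "(0) + (1) * x + (-1) * y = 0"
    from Q[OF _ _ _ this] show False by simp
  qed
  have D: "1-y > 0" using x y s by simp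
  have T: "Tmap (1,2) (x,y) = ((x-y)/(1-y), y/(1-y))" by (simp add: Tmap_def)
  have pos: "(x-y)/(1-y) > 0" "y/(1-y) > 0" using x y s h ne D by (auto intro!: divide_pos_pos)
  have sum: "(x-y)/(1-y) + y/(1-y) < 1"
  proof -
    have "(x-y)/(1-y) + y/(1-y) = ((x-y)+y)/(1-y)" by (simp only: add_divide_distrib)
    thus ?thesis using x y s h ne D by (simp add: pos_divide_less_eq)
  qed
  have QQ: "c0 = 0 \<and> c1 = 0 \<and> c2 = 0" if c: "c0 \<in> \<rat>" "c1 \<in> \<rat>" "c2 \<in> \<rat>"
     and eq: "c0 + c1 * ((x-y)/(1-y)) + c2 * (y/(1-y)) = 0" for c0 c1 c2
  proof -
    have "(c0 + c1 * ((x-y)/(1-y)) + c2 * (y/(1-y))) * (1-y) = c0 * (1-y) + c1 * (x-y) + c2 * (y)"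
      using D by (intro mulD) simp
    also have "\<dots> = (c0) + (c1) * x + (c2-c0-c1) * y" by (simp add: algebra_simps)
    finally have "(c0) + (c1) * x + (c2-c0-c1) * y = 0" using eq by simp
    moreover have "(c0) \<in> \<rat>" "(c1) \<in> \<rat>" "(c2-c0-c1) \<in> \<rat>" using c by auto
    ultimately have "(c0) = 0 \<and> (c1) = 0 \<and> (c2-c0-c1) = 0" using Q by blast
    then show ?thesis by linarith
  qed
  have "good (Tmap (1,2) (x,y))" unfolding T good_def using pos sum QQ by auto
  moreover have "rel (1,2) (nu (x,y)) (nu (Tmap (1,2) (x,y))) (1-y)"
  proof -
    obtain u v where uv: "u = (x-y)/(1-y)" "v = y/(1-y)" by blast
    have hu: "(1-y) * u = x-y" and hv: "(1-y) * v = y" using D uv by simp_all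
    show ?thesis unfolding rel_def T uv[symmetric] using D hu hv
      by (simp add: vec_eq_iff forall_3' nu_def ee_nth algebra_simps)
  qed
  ultimately show ?thesis by blast
qed

lemma case21:
  assumes g: "good (x,y)" and h: "x \<le> y"
  shows "good (Tmap (2,1) (x,y)) \<and> rel (2,1) (nu (x,y)) (nu (Tmap (2,1) (x,y))) (1-x)"
proof -
  have x: "x > 0" and y: "y > 0" and s: "x + y < 1" and
    Q: "\<And>c0 c1 c2. c0 \<in> \<rat> \<Longrightarrow> c1 \<in> \<rat> \<Longrightarrow> c2 \<in> \<rat> \<Longrightarrow>
        c0 + c1 * x + c2 * y = 0 \<Longrightarrow> c0 = 0 \<and> c1 = 0 \<and> c2 = 0"
    using g by (auto simp: good_def)
  have ne: "(0) + (1) * x + (-1) * y \<noteq> 0"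
  proof
    assume "(0) + (1) * x + (-1) * y = 0"
    from Q[OF _ _ _ this] show False by simp
  qed
  have D: "1-x > 0" using x y s by simp
  have T: "Tmap (2,1) (x,y) = (x/(1-x), (y-x)/(1-x))" by (simp add: Tmap_def)
  have pos: "x/(1-x) > 0" "(y-x)/(1-x) > 0" using x y s h ne D by (auto intro!: divide_pos_pos)
  have sum: "x/(1-x) + (y-x)/(1-x) < 1"
  proof -
    have "x/(1-x) + (y-x)/(1-x) = (x+(y-x))/(1-x)" by (simp only: add_divide_distrib)
    thus ?thesis using x y s h ne D by (simp add: pos_divide_less_eq)
  qed
  have QQ: "c0 = 0 \<and> c1 = 0 \<and> c2 = 0" if c: "c0 \<in> \<rat>" "c1 \<in> \<rat>" "c2 \<in> \<rat>"
     and eq: "c0 + c1 * (x/(1-x)) + c2 * ((y-x)/(1-x)) = 0" for c0 c1 c2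
  proof -
    have "(c0 + c1 * (x/(1-x)) + c2 * ((y-x)/(1-x))) * (1-x) = c0 * (1-x) + c1 * (x) + c2 * (y-x)"
      using D by (intro mulD) simp
    also have "\<dots> = (c0) + (c1-c0-c2) * x + (c2) * y" by (simp add: algebra_simps)
    finally have "(c0) + (c1-c0-c2) * x + (c2) * y = 0" using eq by simp
    moreover have "(c0) \<in> \<rat>" "(c1-c0-c2) \<in> \<rat>" "(c2) \<in> \<rat>" using c by auto
    ultimately have "(c0) = 0 \<and> (c1-c0-c2) = 0 \<and> (c2) = 0" using Q by blast
    then show ?thesis by linarith
  qed
  have "good (Tmap (2,1) (x,y))" unfolding T good_def using pos sum QQ by auto
  moreover have "rel (2,1) (nu (x,y)) (nu (Tmap (2,1) (x,y))) (1-x)"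
  proof -
    obtain u v where uv: "u = x/(1-x)" "v = (y-x)/(1-x)" by blast
    have hu: "(1-x) * u = x" and hv: "(1-x) * v = y-x" using D uv by simp_all
    show ?thesis unfolding rel_def T uv[symmetric] using D hu hv
      by (simp add: vec_eq_iff forall_3' nu_def ee_nth algebra_simps)
  qed
  ultimately show ?thesis by blast
qed

lemma case01:
  assumes g: "good (x,y)" and h: "2*x+y-1 \<le> 0"
  shows "good (Tmap (0,1) (x,y)) \<and> rel (0,1) (nu (x,y)) (nu (Tmap (0,1) (x,y))) (1-x)"
proof -
  have x: "x > 0" and y: "y > 0" and s: "x + y < 1" and
    Q: "\<And>c0 c1 c2. c0 \<in> \<rat> \<Longrightarrow> c1 \<in> \<rat> \<Longrightarrow> c2 \<in> \<rat> \<Longrightarrow>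
        c0 + c1 * x + c2 * y = 0 \<Longrightarrow> c0 = 0 \<and> c1 = 0 \<and> c2 = 0"
    using g by (auto simp: good_def)
  have ne: "(-1) + (2) * x + (1) * y \<noteq> 0"
  proof
    assume "(-1) + (2) * x + (1) * y = 0"
    from Q[OF _ _ _ this] show False by simp
  qed
  have D: "1-x > 0" using x y s by simp
  have T: "Tmap (0,1) (x,y) = (x/(1-x), y/(1-x))" by (simp add: Tmap_def)
  have pos: "x/(1-x) > 0" "y/(1-x) > 0" using x y s h ne D by (auto intro!: divide_pos_pos)
  have sum: "x/(1-x) + y/(1-x) < 1"
  proof -
    have "x/(1-x) + y/(1-x) = (x+y)/(1-x)" by (simp only: add_divide_distrib)
    thus ?thesis using x y s h ne D by (simp add: pos_divide_less_eq)
  qed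
  have QQ: "c0 = 0 \<and> c1 = 0 \<and> c2 = 0" if c: "c0 \<in> \<rat>" "c1 \<in> \<rat>" "c2 \<in> \<rat>"
     and eq: "c0 + c1 * (x/(1-x)) + c2 * (y/(1-x)) = 0" for c0 c1 c2
  proof -
    have "(c0 + c1 * (x/(1-x)) + c2 * (y/(1-x))) * (1-x) = c0 * (1-x) + c1 * (x) + c2 * (y)"
      using D by (intro mulD) simp
    also have "\<dots> = (c0) + (c1-c0) * x + (c2) * y" by (simp add: algebra_simps)
    finally have "(c0) + (c1-c0) * x + (c2) * y = 0" using eq by simp
    moreover have "(c0) \<in> \<rat>" "(c1-c0) \<in> \<rat>" "(c2) \<in> \<rat>" using c by auto
    ultimately have "(c0) = 0 \<and> (c1-c0) = 0 \<and> (c2) = 0" using Q by blast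
    then show ?thesis by linarith
  qed
  have "good (Tmap (0,1) (x,y))" unfolding T good_def using pos sum QQ by auto
  moreover have "rel (0,1) (nu (x,y)) (nu (Tmap (0,1) (x,y))) (1-x)"
  proof -
    obtain u v where uv: "u = x/(1-x)" "v = y/(1-x)" by blast
    have hu: "(1-x) * u = x" and hv: "(1-x) * v = y" using D uv by simp_all
    show ?thesis unfolding rel_def T uv[symmetric] using D hu hv
      by (simp add: vec_eq_iff forall_3' nu_def ee_nth algebra_simps)
  qed
  ultimately show ?thesis by blast
qed

lemma case10:
  assumes g: "good (x,y)" and h: "2*x+y-1 \<ge> 0"
  shows "good (Tmap (1,0) (x,y)) \<and> rel (1,0) (nu (x,y)) (nu (Tmap (1,0) (x,y))) (x+y)"
proof -
  have x: "x > 0" and y: "y > 0" and s: "x + y < 1" and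
    Q: "\<And>c0 c1 c2. c0 \<in> \<rat> \<Longrightarrow> c1 \<in> \<rat> \<Longrightarrow> c2 \<in> \<rat> \<Longrightarrow>
        c0 + c1 * x + c2 * y = 0 \<Longrightarrow> c0 = 0 \<and> c1 = 0 \<and> c2 = 0"
    using g by (auto simp: good_def)
  have ne: "(-1) + (2) * x + (1) * y \<noteq> 0"
  proof
    assume "(-1) + (2) * x + (1) * y = 0"
    from Q[OF _ _ _ this] show False by simp
  qed
  have D: "x+y > 0" using x y s by simp
  have T: "Tmap (1,0) (x,y) = ((2*x+y-1)/(x+y), y/(x+y))" by (simp add: Tmap_def)
  have pos: "(2*x+y-1)/(x+y) > 0" "y/(x+y) > 0" using x y s h ne D by (auto intro!: divide_pos_pos)
  have sum: "(2*x+y-1)/(x+y) + y/(x+y) < 1"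
  proof -
    have "(2*x+y-1)/(x+y) + y/(x+y) = ((2*x+y-1)+y)/(x+y)" by (simp only: add_divide_distrib)
    thus ?thesis using x y s h ne D by (simp add: pos_divide_less_eq)
  qed
  have QQ: "c0 = 0 \<and> c1 = 0 \<and> c2 = 0" if c: "c0 \<in> \<rat>" "c1 \<in> \<rat>" "c2 \<in> \<rat>"
     and eq: "c0 + c1 * ((2*x+y-1)/(x+y)) + c2 * (y/(x+y)) = 0" for c0 c1 c2
  proof -
    have "(c0 + c1 * ((2*x+y-1)/(x+y)) + c2 * (y/(x+y))) * (x+y) = c0 * (x+y) + c1 * (2*x+y-1) + c2 * (y)"
      using D by (intro mulD) simp
    also have "\<dots> = (-c1) + (c0+2*c1) * x + (c0+c1+c2) * y" by (simp add: algebra_simps)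
    finally have "(-c1) + (c0+2*c1) * x + (c0+c1+c2) * y = 0" using eq by simp
    moreover have "(-c1) \<in> \<rat>" "(c0+2*c1) \<in> \<rat>" "(c0+c1+c2) \<in> \<rat>" using c by auto
    ultimately have "(-c1) = 0 \<and> (c0+2*c1) = 0 \<and> (c0+c1+c2) = 0" using Q by blast
    then show ?thesis by linarith
  qed
  have "good (Tmap (1,0) (x,y))" unfolding T good_def using pos sum QQ by auto
  moreover have "rel (1,0) (nu (x,y)) (nu (Tmap (1,0) (x,y))) (x+y)"
  proof -
    obtain u v where uv: "u = (2*x+y-1)/(x+y)" "v = y/(x+y)" by blast
    have hu: "(x+y) * u = 2*x+y-1" and hv: "(x+y) * v = y" using D uv by simp_all
    show ?thesis unfolding rel_def T uv[symmetric] using D hu hv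
      by (simp add: vec_eq_iff forall_3' nu_def ee_nth algebra_simps)
  qed
  ultimately show ?thesis by blast
qed

lemma case02:
  assumes g: "good (x,y)" and h: "x+2*y-1 \<le> 0"
  shows "good (Tmap (0,2) (x,y)) \<and> rel (0,2) (nu (x,y)) (nu (Tmap (0,2) (x,y))) (1-y)"
proof -
  have x: "x > 0" and y: "y > 0" and s: "x + y < 1" and
    Q: "\<And>c0 c1 c2. c0 \<in> \<rat> \<Longrightarrow> c1 \<in> \<rat> \<Longrightarrow> c2 \<in> \<rat> \<Longrightarrow>
        c0 + c1 * x + c2 * y = 0 \<Longrightarrow> c0 = 0 \<and> c1 = 0 \<and> c2 = 0"
    using g by (auto simp: good_def)
  have ne: "(-1) + (1) * x + (2) * y \<noteq> 0"
  proof
    assume "(-1) + (1) * x + (2) * y = 0"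
    from Q[OF _ _ _ this] show False by simp
  qed
  have D: "1-y > 0" using x y s by simp
  have T: "Tmap (0,2) (x,y) = (x/(1-y), y/(1-y))" by (simp add: Tmap_def)
  have pos: "x/(1-y) > 0" "y/(1-y) > 0" using x y s h ne D by (auto intro!: divide_pos_pos)
  have sum: "x/(1-y) + y/(1-y) < 1"
  proof -
    have "x/(1-y) + y/(1-y) = (x+y)/(1-y)" by (simp only: add_divide_distrib)
    thus ?thesis using x y s h ne D by (simp add: pos_divide_less_eq)
  qed
  have QQ: "c0 = 0 \<and> c1 = 0 \<and> c2 = 0" if c: "c0 \<in> \<rat>" "c1 \<in> \<rat>" "c2 \<in> \<rat>"
     and eq: "c0 + c1 * (x/(1-y)) + c2 * (y/(1-y)) = 0" for c0 c1 c2
  proof -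
    have "(c0 + c1 * (x/(1-y)) + c2 * (y/(1-y))) * (1-y) = c0 * (1-y) + c1 * (x) + c2 * (y)"
      using D by (intro mulD) simp
    also have "\<dots> = (c0) + (c1) * x + (c2-c0) * y" by (simp add: algebra_simps)
    finally have "(c0) + (c1) * x + (c2-c0) * y = 0" using eq by simp
    moreover have "(c0) \<in> \<rat>" "(c1) \<in> \<rat>" "(c2-c0) \<in> \<rat>" using c by auto
    ultimately have "(c0) = 0 \<and> (c1) = 0 \<and> (c2-c0) = 0" using Q by blast
    then show ?thesis by linarith
  qed
  have "good (Tmap (0,2) (x,y))" unfolding T good_def using pos sum QQ by auto
  moreover have "rel (0,2) (nu (x,y)) (nu (Tmap (0,2) (x,y))) (1-y)"
  proof -
    obtain u v where uv: "u = x/(1-y)" "v = y/(1-y)" by blast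
    have hu: "(1-y) * u = x" and hv: "(1-y) * v = y" using D uv by simp_all
    show ?thesis unfolding rel_def T uv[symmetric] using D hu hv
      by (simp add: vec_eq_iff forall_3' nu_def ee_nth algebra_simps)
  qed
  ultimately show ?thesis by blast
qed

lemma case20:
  assumes g: "good (x,y)" and h: "x+2*y-1 \<ge> 0"
  shows "good (Tmap (2,0) (x,y)) \<and> rel (2,0) (nu (x,y)) (nu (Tmap (2,0) (x,y))) (x+y)"
proof -
  have x: "x > 0" and y: "y > 0" and s: "x + y < 1" and
    Q: "\<And>c0 c1 c2. c0 \<in> \<rat> \<Longrightarrow> c1 \<in> \<rat> \<Longrightarrow> c2 \<in> \<rat> \<Longrightarrow>
        c0 + c1 * x + c2 * y = 0 \<Longrightarrow> c0 = 0 \<and> c1 = 0 \<and> c2 = 0"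
    using g by (auto simp: good_def)
  have ne: "(-1) + (1) * x + (2) * y \<noteq> 0"
  proof
    assume "(-1) + (1) * x + (2) * y = 0"
    from Q[OF _ _ _ this] show False by simp
  qed
  have D: "x+y > 0" using x y s by simp
  have T: "Tmap (2,0) (x,y) = (x/(x+y), (x+2*y-1)/(x+y))" by (simp add: Tmap_def)
  have pos: "x/(x+y) > 0" "(x+2*y-1)/(x+y) > 0" using x y s h ne D by (auto intro!: divide_pos_pos)
  have sum: "x/(x+y) + (x+2*y-1)/(x+y) < 1"
  proof -
    have "x/(x+y) + (x+2*y-1)/(x+y) = (x+(x+2*y-1))/(x+y)" by (simp only: add_divide_distrib)
    thus ?thesis using x y s h ne D by (simp add: pos_divide_less_eq)
  qed
  have QQ: "c0 = 0 \<and> c1 = 0 \<and> c2 = 0" if c: "c0 \<in> \<rat>" "c1 \<in> \<rat>" "c2 \<in> \<rat>"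
     and eq: "c0 + c1 * (x/(x+y)) + c2 * ((x+2*y-1)/(x+y)) = 0" for c0 c1 c2
  proof -
    have "(c0 + c1 * (x/(x+y)) + c2 * ((x+2*y-1)/(x+y))) * (x+y) = c0 * (x+y) + c1 * (x) + c2 * (x+2*y-1)"
      using D by (intro mulD) simp
    also have "\<dots> = (-c2) + (c0+c1+c2) * x + (c0+2*c2) * y" by (simp add: algebra_simps)
    finally have "(-c2) + (c0+c1+c2) * x + (c0+2*c2) * y = 0" using eq by simp
    moreover have "(-c2) \<in> \<rat>" "(c0+c1+c2) \<in> \<rat>" "(c0+2*c2) \<in> \<rat>" using c by auto
    ultimately have "(-c2) = 0 \<and> (c0+c1+c2) = 0 \<and> (c0+2*c2) = 0" using Q by blast
    then show ?thesis by linarith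
  qed
  have "good (Tmap (2,0) (x,y))" unfolding T good_def using pos sum QQ by auto
  moreover have "rel (2,0) (nu (x,y)) (nu (Tmap (2,0) (x,y))) (x+y)"
  proof -
    obtain u v where uv: "u = x/(x+y)" "v = (x+2*y-1)/(x+y)" by blast
    have hu: "(x+y) * u = x" and hv: "(x+y) * v = x+2*y-1" using D uv by simp_all
    show ?thesis unfolding rel_def T uv[symmetric] using D hu hv
      by (simp add: vec_eq_iff forall_3' nu_def ee_nth algebra_simps)
  qed
  ultimately show ?thesis by blast
qed

lemma step:
  assumes g: "good ab"
  shows "ok6 (epsilon K r ab) \<and> good (Tgauss K r ab) \<and>
         (\<exists>c. rel (epsilon K r ab) (nu ab) (nu (Tgauss K r ab)) c)"
proof -
  obtain x y where ab: "ab = (x,y)" by (cases ab)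
  have "x > 0" "y > 0" "x + y < 1" using g ab by (auto simp: good_def)
  from eps_form[OF this, of K r] g show ?thesis unfolding ab Tgauss_def
    using case12[of x y] case21[of x y] case01[of x y] case10[of x y] case02[of x y] case20[of x y]
    by (auto simp: ok6_def)
qed

lemma Theta_comp_outer:
  "Theta_comp eps (Suc n) P = Theta (eps 0) (Theta_comp (\<lambda>t. eps (Suc t)) n P)"
  by (induction n arbitrary: P) auto

lemma Theta_comp_mono: "P \<subseteq> Q \<Longrightarrow> Theta_comp eps n P \<subseteq> Theta_comp eps n Q"
  by (induction n arbitrary: P Q) (auto simp: Theta_mono)

lemma U_Theta: "ok6 e \<Longrightarrow> U \<subseteq> Theta e U"
  by (cases e) (force simp: Theta_U)

lemma inv_all:
  assumes H: "\<And>k. ok6 (eps k) \<and> (\<forall>m. a k $ m > 0) \<and> (\<exists>c. rel (eps k) (a k) (a (Suc k)) c)"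
  shows "Inv (a k) (Theta_comp (\<lambda>t. eps (k+t)) m U) (Theta_comp (\<lambda>t. eps (k+t)) m U')"
proof (induction m arbitrary: k)
  case 0
  then show ?case using H[of k] by (simp add: Inv_base)
next
  case (Suc m)
  obtain i j where ij: "eps k = (i,j)" by (cases "eps k")
  from H[of k] obtain c where e: "ok6 (i,j)" and r: "rel (i,j) (a k) (a (Suc k)) c"
    using ij by auto
  have pos: "\<And>m. a (Suc k) $ m > 0" using H[of "Suc k"] by auto
  have sh: "(\<lambda>t. eps (k + Suc t)) = (\<lambda>t. eps (Suc k + t))" by simp
  from Inv_step[OF e r pos Suc.IH[of "Suc k"]] show ?case
    by (simp only: Theta_comp_outer sh ij add_0_right)
qed

theorem corollary5p8:
  fixes K :: "real set" and p q :: nat and a0 b0 :: real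
    and r :: real and ab :: "nat \<Rightarrow> real \<times> real" and eps :: "nat \<Rightarrow> 3 \<times> 3"
    and gamma gamma' :: "nat \<Rightarrow> square set"
  assumes "real_cubic_field K"
    and "p > 0" and "q > 0" and "coprime p q" and "\<not> 3 dvd p"
    and "(a0, b0) \<in> Delta_K K"
  defines "r \<equiv> real p / real q"
    and "ab \<equiv> \<lambda>n. (Tgauss K r ^^ n) (a0, b0)"
    and "eps \<equiv> \<lambda>n. epsilon K r (ab n)"
    and "gamma \<equiv> \<lambda>n. Theta_comp eps n U"
    and "gamma' \<equiv> \<lambda>n. Theta_comp eps n U'"
  shows "(\<forall>n. gamma n - gamma' n = U \<and> gamma' n - gamma n = U')
       \<and> (\<forall>n. gamma n \<subseteq> gamma (Suc n))
       \<and> (\<Union>n. gamma n) \<subseteq> stepped (nu (a0, b0))"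
proof -
  have g0: "good (a0, b0)" using assms(6) by (auto simp: Delta_K_def good_def)
  have abS: "ab (Suc k) = Tgauss K r (ab k)" for k by (simp add: ab_def)
  have gk: "good (ab k)" for k
  proof (induction k)
    case 0 then show ?case using g0 by (simp add: ab_def)
  next
    case (Suc k) then show ?case using step[of "ab k" K r] by (simp add: abS)
  qed
  have H: "ok6 (eps k) \<and> (\<forall>m. nu (ab k) $ m > 0) \<and> (\<exists>c. rel (eps k) (nu (ab k)) (nu (ab (Suc k))) c)" for k
    using step[OF gk[of k], of K r] good_nu_pos[OF gk[of k]] by (simp add: eps_def abS)
  have I: "Inv (nu (ab 0)) (gamma n) (gamma' n)" for n
    using inv_all[of eps "\<lambda>k. nu (ab k)", OF H, of 0 n] by (simp add: gamma_def gamma'_def)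
  have ab0: "ab 0 = (a0, b0)" by (simp add: ab_def)
  show ?thesis
  proof (intro conjI allI)
    fix n
    show "gamma n - gamma' n = U" "gamma' n - gamma n = U'" using Inv_conseq[OF I[of n]] by auto
  next
    fix n
    have "U \<subseteq> Theta (eps n) U" using H[of n] U_Theta by blast
    then show "gamma n \<subseteq> gamma (Suc n)" unfolding gamma_def
      by (simp add: Theta_comp_mono)
  next
    show "(\<Union>n. gamma n) \<subseteq> stepped (nu (a0, b0))"
      using Inv_conseq(3)[OF I] ab0 by auto
  qed
qed

end
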